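(* Let $X,Y$ be Archimedean vector lattices and let $T:X\to Y$ be a linear operator satisfying condition $(\beta)$. Then for each $x\in X$ we have $T(|x|)\in\{Tx\}^{dd}$.
   Context: All vector lattices are Archimedean. For a subset $A$ of a vector lattice $X$, $A^d=\{x\in X: |x|\wedge|a|=0 \text{ for all } a\in A\}$ and $A^{dd}=(A^d)^d$. For $a,b\in X$ we write $a\lhd b$ if $\{a\}^{dd}\subseteq\{b\}^{dd}$. A linear operator $T:X\to Y$ satisfies condition $(\beta)$ if $Ta\lhd Tb$ in $Y$ whenever $a\lhd b$ in $X$. *)

theory Defs
  imports Main "HOL.Real_Vector_Spaces"
begin

class vector_lattice = ordered_real_vector + lattice

definition vabs :: "'a::vector_lattice \<Rightarrow> 'a" where
  "vabs x = sup x (- x)"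

definition archimedean_vl :: "'a::vector_lattice itself \<Rightarrow> bool" where
  "archimedean_vl _ \<longleftrightarrow>
     (\<forall>x y :: 'a. 0 \<le> x \<and> (\<forall>n::nat. real n *\<^sub>R x \<le> y) \<longrightarrow> x = 0)"

definition disj_compl :: "'a::vector_lattice set \<Rightarrow> 'a set" where
  "disj_compl A = {x. \<forall>a\<in>A. inf (vabs x) (vabs a) = 0}"

definition bdisj_le :: "'a::vector_lattice \<Rightarrow> 'a \<Rightarrow> bool" where
  "bdisj_le a b \<longleftrightarrow> disj_compl (disj_compl {a}) \<subseteq> disj_compl (disj_compl {b})"

definition cond_beta :: "('a::vector_lattice \<Rightarrow> 'b::vector_lattice) \<Rightarrow> bool" where
  "cond_beta T \<longleftrightarrow> (\<forall>a b. bdisj_le a b \<longrightarrow> bdisj_le (T a) (T b))"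

end

theory Submission
  imports Defs
begin

lemma vabs_nonneg: "0 \<le> vabs (x::'a::vector_lattice)"
proof -
  let ?y = "vabs x"
  have "x \<le> ?y" "- x \<le> ?y" by (auto simp: vabs_def)
  hence "x + - x \<le> ?y + ?y" by (rule add_mono)
  hence "0 \<le> ?y + ?y" by simp
  hence "0 \<le> (2::real) *\<^sub>R ?y" by (simp add: scaleR_2)
  hence "0 \<le> (1/2::real) *\<^sub>R ((2::real) *\<^sub>R ?y)" by (rule scaleR_nonneg_nonneg[rotated]) simp
  thus ?thesis by simp
qed

lemma vabs_vabs: "vabs (vabs (x::'a::vector_lattice)) = vabs x"
proof -
  have "- vabs x \<le> vabs x"
    using vabs_nonneg[of x] order_trans[of "- vabs x" 0 "vabs x"] by simp
  thus ?thesis by (simp add: vabs_def[of "vabs x"] sup_absorb1)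
qed

lemma dc_vabs: "disj_compl {vabs x} = disj_compl {x}"
  by (simp add: disj_compl_def vabs_vabs)

lemma self_dd: "y \<in> disj_compl (disj_compl {y})"
  by (simp add: disj_compl_def inf_commute)

theorem corollary2p3:
  fixes T :: "'a::vector_lattice \<Rightarrow> 'b::vector_lattice"
  assumes "archimedean_vl TYPE('a)"
    and "archimedean_vl TYPE('b)"
    and "linear T"
    and "cond_beta T"
  shows "\<forall>x. T (vabs x) \<in> disj_compl (disj_compl {T x})"
proof
  fix x :: 'a
  have "bdisj_le (vabs x) x" by (simp add: bdisj_le_def dc_vabs)
  hence "bdisj_le (T (vabs x)) (T x)" using assms(4) by (simp add: cond_beta_def)
  thus "T (vabs x) \<in> disj_compl (disj_compl {T x})"
    using self_dd[of "T (vabs x)"] by (auto simp: bdisj_le_def)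
qed

end
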